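(* Let $p_1\le p_2\le\dots\le p_m$ be a probability distribution on $m$ urns, and let $C$ be the number of balls thrown independently into the urns according to this distribution until every urn contains at least one ball. Then, for large values of $m$, \[ \frac{1}{p_1}\le E[C]\le 2\,H_m\,\frac{1}{p_1}, \] where $H_m=\sum_{j=1}^m 1/j$. *)

theory Defs
  imports "HOL-Probability.Probability"
begin

text \<open>Urns are numbered 0,...,m-1 (urn i+1 of the paper is urn i here).\<close>

definition all_covered :: "nat \<Rightarrow> nat stream \<Rightarrow> nat \<Rightarrow> bool" where
  "all_covered m \<omega> n \<longleftrightarrow> (\<forall>i<m. \<exists>k<n. \<omega> !! k = i)"

definition cover_time :: "nat \<Rightarrow> nat stream \<Rightarrow> ennreal" where
  "cover_time m \<omega> =
     (if \<exists>n. all_covered m \<omega> n then of_nat (LEAST n. all_covered m \<omega> n) else \<infinity>)"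

definition expected_cover_time :: "nat \<Rightarrow> nat pmf \<Rightarrow> ennreal" where
  "expected_cover_time m P =
     (\<integral>\<^sup>+ \<omega>. cover_time m \<omega> \<partial>stream_space (measure_pmf P))"

end

theory Submission imports Defs begin

lemma meas_cov[measurable]:
  "Measurable.pred (stream_space (measure_pmf P)) (\<lambda>\<omega>. all_covered m \<omega> n)"
  unfolding all_covered_def by measurable

lemma meas_avoid[measurable]:
  "Measurable.pred (stream_space (measure_pmf P)) (\<lambda>\<omega>. \<forall>k<n. \<omega> !! k \<noteq> i)"
  by measurable

lemma avoid:
  "emeasure (stream_space (measure_pmf P)) {\<omega>. \<forall>k<n. \<omega>!!k \<noteq> i} = ennreal ((1 - pmf P i)^n)"
proof (induction n)
  case 0
  interpret S: prob_space "stream_space (measure_pmf P)" by (rule prob_space.prob_space_stream_space[OF prob_space_measure_pmf])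
  show ?case using S.emeasure_space_1 by (simp add: space_stream_space)
next
  case (Suc n)
  have c: "emeasure (measure_pmf P) (UNIV - {i}) = ennreal (1 - pmf P i)"
    using measure_pmf.prob_compl[of "{i}" P] by (simp add: measure_pmf.emeasure_eq_measure measure_pmf_single)
  have ms: "{\<omega>. \<forall>k<Suc n. \<omega>!!k \<noteq> i} \<in> sets (stream_space (measure_pmf P))"
    using meas_avoid[where P=P and n="Suc n" and i=i] unfolding pred_def by (simp add: space_stream_space)
  have "emeasure (stream_space (measure_pmf P)) {\<omega>. \<forall>k<Suc n. \<omega>!!k \<noteq> i}
     = (\<integral>\<^sup>+t. emeasure (stream_space (measure_pmf P)) {x\<in>space (stream_space (measure_pmf P)). t ## x \<in> {\<omega>. \<forall>k<Suc n. \<omega>!!k \<noteq> i}} \<partial>measure_pmf P)"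
    by (rule prob_space.emeasure_stream_space[OF prob_space_measure_pmf]) (rule ms)
  also have "\<dots> = (\<integral>\<^sup>+t. indicator (UNIV - {i}) t * ennreal ((1 - pmf P i)^n) \<partial>measure_pmf P)"
  proof (rule nn_integral_cong)
    fix t
    have "{x\<in>space (stream_space (measure_pmf P)). t ## x \<in> {\<omega>. \<forall>k<Suc n. \<omega>!!k \<noteq> i}}
       = (if t = i then {} else {\<omega>. \<forall>k<n. \<omega>!!k \<noteq> i})"
      by (auto simp: space_stream_space All_less_Suc2 Stream_snth split: nat.splits)
    then show "emeasure (stream_space (measure_pmf P)) {x\<in>space (stream_space (measure_pmf P)). t ## x \<in> {\<omega>. \<forall>k<Suc n. \<omega>!!k \<noteq> i}} = indicator (UNIV - {i}) t * ennreal ((1 - pmf P i)^n)"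
      using Suc by simp
  qed
  also have "\<dots> = ennreal (1 - pmf P i) * ennreal ((1 - pmf P i)^n)"
    by (subst nn_integral_multc) (auto simp: c)
  also have "\<dots> = ennreal ((1 - pmf P i)^Suc n)"
    by (simp add: ennreal_mult[symmetric] pmf_le_1)
  finally show ?case .
qed
lemma cov_mono: "all_covered m \<omega> n \<Longrightarrow> n \<le> n' \<Longrightarrow> all_covered m \<omega> n'"
  unfolding all_covered_def by (meson less_le_trans)

lemma sum_one_top: "(\<Sum>n. (1::ennreal)) = \<top>"
proof -
  have "of_nat N \<le> (\<Sum>n. (1::ennreal))" for N
    using sum_le_suminf[of "\<lambda>n. 1::ennreal" "{..<N}"] by (simp add: summableI)
  then have "(SUP x. of_nat x :: ennreal) \<le> (\<Sum>n. (1::ennreal))" by (rule SUP_least)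
  then show ?thesis by (simp add: ennreal_SUP_of_nat_eq_top top_unique)
qed

lemma cover_sum: "cover_time m \<omega> = (\<Sum>n. indicator {\<omega>. \<not> all_covered m \<omega> n} \<omega>)"
proof (cases "\<exists>n. all_covered m \<omega> n")
  case True
  define L where "L = (LEAST n. all_covered m \<omega> n)"
  have L: "all_covered m \<omega> L" unfolding L_def using True by (rule LeastI_ex)
  have ind: "indicator {\<omega>. \<not> all_covered m \<omega> n} \<omega> = (if n \<in> {..<L} then 1 else (0::ennreal))" for n
  proof -
    have "n < L \<Longrightarrow> \<not> all_covered m \<omega> n" unfolding L_def using not_less_Least by blast
    moreover have "\<not> n < L \<Longrightarrow> all_covered m \<omega> n" using cov_mono[OF L] by simp
    ultimately show ?thesis by (auto simp: indicator_def)
  qed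
  have "(\<Sum>n. indicator {\<omega>. \<not> all_covered m \<omega> n} \<omega>) = (\<Sum>n<L. (1::ennreal))"
    unfolding ind by (subst suminf_finite[of "{..<L}"]) auto
  then show ?thesis using True by (simp add: cover_time_def L_def)
next
  case False
  then have "(\<Sum>n. indicator {\<omega>. \<not> all_covered m \<omega> n} \<omega>) = (\<Sum>n. (1::ennreal))" by simp
  then show ?thesis using False sum_one_top by (simp add: cover_time_def)
qed

lemma E_sum:
  "expected_cover_time m P = (\<Sum>n. emeasure (stream_space (measure_pmf P)) {\<omega>. \<not> all_covered m \<omega> n})"
proof -
  have ms: "{\<omega>. \<not> all_covered m \<omega> n} \<in> sets (stream_space (measure_pmf P))" for n
  proof -
    have "Measurable.pred (stream_space (measure_pmf P)) (\<lambda>\<omega>. \<not> all_covered m \<omega> n)" by measurable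
    then show ?thesis unfolding pred_def by (simp add: space_stream_space)
  qed
  have "expected_cover_time m P = (\<integral>\<^sup>+\<omega>. (\<Sum>n. indicator {\<omega>. \<not> all_covered m \<omega> n} \<omega>) \<partial>stream_space (measure_pmf P))"
    unfolding expected_cover_time_def by (rule nn_integral_cong) (rule cover_sum)
  also have "\<dots> = (\<Sum>n. \<integral>\<^sup>+\<omega>. indicator {\<omega>. \<not> all_covered m \<omega> n} \<omega> \<partial>stream_space (measure_pmf P))"
    by (rule nn_integral_suminf) (use ms in auto)
  also have "\<dots> = (\<Sum>n. emeasure (stream_space (measure_pmf P)) {\<omega>. \<not> all_covered m \<omega> n})"
    using ms by simp
  finally show ?thesis .
qed

lemma real_facts:
  fixes p :: real and m :: nat
  assumes p: "0 < p" "p \<le> 1" and m: "m \<ge> 9"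
  defines "N \<equiv> nat \<lceil>ln (real m) / p\<rceil>"
  shows "real m * (1 - p)^N \<le> 1" and "real N + 1 / p \<le> 2 * harm m / p"
proof -
  have mpos: "real m > 0" using m by simp
  have N1: "real N \<ge> ln (real m) / p" unfolding N_def by linarith
  have "ln (real m) \<ge> 0" using m by simp
  then have x0: "ln (real m) / p \<ge> 0" using p by simp
  then have "real N = of_int \<lceil>ln (real m) / p\<rceil>" unfolding N_def by simp
  then have N2: "real N \<le> ln (real m) / p + 1" using of_int_ceiling_le_add_one[of "ln (real m) / p"] by linarith
  have "(1 - p)^N \<le> exp (- p) ^ N"
    using p exp_ge_add_one_self[of "-p"] by (intro power_mono) auto
  also have "\<dots> = exp (real N * (- p))" by (rule exp_of_nat_mult[symmetric])
  also have "\<dots> \<le> exp (- ln (real m))"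
    using N1 p by (simp add: field_simps)
  also have "\<dots> = 1 / real m" using mpos by (simp add: exp_minus inverse_eq_divide)
  finally show "real m * (1 - p)^N \<le> 1" using mpos by (simp add: field_simps)
  have "exp 2 = exp 1 * exp (1::real)" by (simp flip: exp_add)
  also have "\<dots> \<le> 3 * 3" using exp_le by (intro mult_mono) auto
  also have "\<dots> \<le> real m" using m by simp
  finally have l2: "2 \<le> ln (real m)" using mpos by (simp add: ln_ge_iff)
  have hl: "ln (real m) \<le> harm m"
    using ln_le_harm[of m] mpos by (smt (verit) ln_le_cancel_iff of_nat_0_le_iff)
  have "real N + 1 / p \<le> ln (real m) / p + 1 + 1/p" using N2 by simp
  also have "\<dots> \<le> ln (real m) / p + 2 / p" using p by (simp add: field_simps)
  also have "\<dots> = (ln (real m) + 2) / p" by (simp add: add_divide_distrib)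
  also have "\<dots> \<le> 2 * harm m / p" using p l2 hl by (intro divide_right_mono) auto
  finally show "real N + 1 / p \<le> 2 * harm m / p" .
qed

theorem theorem8:
  "\<exists>M::nat. \<forall>m\<ge>M. \<forall>P :: nat pmf.
     set_pmf P \<subseteq> {..<m} \<and>
     (\<forall>i j. i \<le> j \<and> j < m \<longrightarrow> pmf P i \<le> pmf P j) \<and>
     pmf P 0 > 0 \<longrightarrow>
       ennreal (1 / pmf P 0) \<le> expected_cover_time m P \<and>
       expected_cover_time m P \<le> ennreal (2 * harm m / pmf P 0)"
proof (intro exI[of _ 9] allI impI)
  fix m :: nat and P :: "nat pmf"
  assume m: "m \<ge> 9"
  assume H: "set_pmf P \<subseteq> {..<m} \<and>
     (\<forall>i j. i \<le> j \<and> j < m \<longrightarrow> pmf P i \<le> pmf P j) \<and> pmf P 0 > 0"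
  define S where "S = stream_space (measure_pmf P)"
  define p where "p = pmf P 0"
  define q where "q = 1 - p"
  have p0: "p > 0" using H p_def by simp
  have p1: "p \<le> 1" unfolding p_def by (rule pmf_le_1)
  have mono: "i < m \<Longrightarrow> p \<le> pmf P i" for i using H p_def by auto
  interpret S: prob_space S unfolding S_def by (rule prob_space.prob_space_stream_space[OF prob_space_measure_pmf])
  have ms: "{\<omega>. \<not> all_covered m \<omega> n} \<in> sets S" for n
  proof -
    have "Measurable.pred S (\<lambda>\<omega>. \<not> all_covered m \<omega> n)" unfolding S_def by measurable
    then show ?thesis unfolding pred_def by (simp add: space_stream_space S_def)
  qed
  have ma: "{\<omega>. \<forall>k<n. \<omega>!!k \<noteq> i} \<in> sets S" for n i
    using meas_avoid[where P=P and n=n and i=i] unfolding pred_def S_def by (simp add: space_stream_space)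
  have E: "expected_cover_time m P = (\<Sum>n. emeasure S {\<omega>. \<not> all_covered m \<omega> n})"
    unfolding S_def by (rule E_sum)
  have q0: "0 \<le> q" "q < 1" using p0 p1 q_def by auto
  have "ennreal (1 / p) = ennreal (\<Sum>n. q^n)"
    using q0 by (simp add: suminf_geometric q_def)
  also have "\<dots> = (\<Sum>n. ennreal (q^n))"
    using q0 by (intro suminf_ennreal2[symmetric]) auto
  also have "\<dots> \<le> (\<Sum>n. emeasure S {\<omega>. \<not> all_covered m \<omega> n})"
  proof (rule suminf_le)
    fix n
    have "ennreal (q^n) = emeasure S {\<omega>. \<forall>k<n. \<omega>!!k \<noteq> 0}"
      unfolding S_def q_def p_def by (rule avoid[symmetric])
    also have "\<dots> \<le> emeasure S {\<omega>. \<not> all_covered m \<omega> n}"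
      using m by (intro emeasure_mono ms) (clarsimp simp: all_covered_def, rule exI[of _ 0], auto)
    finally show "ennreal (q^n) \<le> emeasure S {\<omega>. \<not> all_covered m \<omega> n}" .
  qed (auto intro: summableI)
  finally have lower: "ennreal (1 / p) \<le> expected_cover_time m P" using E by simp
  define N where "N = nat \<lceil>ln (real m) / p\<rceil>"
  have F1: "real m * q^N \<le> 1" and F2: "real N + 1 / p \<le> 2 * harm m / p"
    using real_facts[OF p0 p1 m] unfolding N_def q_def by auto
  define b where "b n = (if n < N then 1 else q^(n - N))" for n
  have bshift: "b (n + N) = q^n" for n by (simp add: b_def)
  have sb: "summable b"
    using summable_iff_shift[of b N] q0 by (simp add: bshift summable_geometric)
  have sumb: "(\<Sum>n. b n) = 1 / p + real N"
  proof -
    have bs: "(\<Sum>i<N. b i) = real N" by (simp add: b_def)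
    show ?thesis
      using suminf_split_initial_segment[OF sb, of N] q0 bs by (simp add: bshift suminf_geometric q_def)
  qed
  have bound: "emeasure S {\<omega>. \<not> all_covered m \<omega> n} \<le> ennreal (b n)" for n
  proof (cases "n < N")
    case True
    then show ?thesis using S.emeasure_le_1 by (simp add: b_def)
  next
    case False
    have "emeasure S {\<omega>. \<not> all_covered m \<omega> n} \<le> emeasure S (\<Union>i\<in>{..<m}. {\<omega>. \<forall>k<n. \<omega>!!k \<noteq> i})"
      by (intro emeasure_mono) (auto simp: all_covered_def intro: ma)
    also have "\<dots> \<le> (\<Sum>i\<in>{..<m}. emeasure S {\<omega>. \<forall>k<n. \<omega>!!k \<noteq> i})"
      by (intro emeasure_subadditive_finite) (auto intro: ma)
    also have "\<dots> = (\<Sum>i\<in>{..<m}. ennreal ((1 - pmf P i)^n))"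
      unfolding S_def by (simp add: avoid)
    also have "\<dots> \<le> (\<Sum>i\<in>{..<m}. ennreal (q^n))"
      using mono pmf_le_1 q_def by (intro sum_mono ennreal_leI power_mono) auto
    also have "\<dots> = ennreal (real m * q^n)"
      using q0 by (simp add: ennreal_of_nat_eq_real_of_nat ennreal_mult)
    also have "\<dots> \<le> ennreal (b n)"
    proof (intro ennreal_leI)
      have "real m * q^n = (real m * q^N) * q^(n - N)"
        using False by (simp add: power_add[symmetric])
      also have "\<dots> \<le> 1 * q^(n - N)"
        using F1 q0 by (intro mult_right_mono) auto
      finally show "real m * q^n \<le> b n" using False by (simp add: b_def)
    qed
    finally show ?thesis .
  qed
  have "expected_cover_time m P \<le> (\<Sum>n. ennreal (b n))"
    unfolding E by (rule suminf_le) (auto intro: summableI bound)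
  also have "\<dots> = ennreal (\<Sum>n. b n)"
  proof (rule suminf_ennreal2)
    show "0 \<le> b i" for i using q0 by (simp add: b_def)
  qed (rule sb)
  also have "\<dots> \<le> ennreal (2 * harm m / p)"
    using F2 sumb by (intro ennreal_leI) simp
  finally show "ennreal (1 / pmf P 0) \<le> expected_cover_time m P \<and>
       expected_cover_time m P \<le> ennreal (2 * harm m / pmf P 0)"
    using lower p_def by simp
qed

end
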